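(* Consider 2-Choices. For any opinion $i$ and any $t\ge1$, on the event $\alpha_{t-1}(i)\le\gamma_{t-1}$, the random variable $\alpha_t(i)-\alpha_{t-1}(i)$ conditioned on $\mathcal F_{t-1}$ satisfies the one-sided $\big(\frac1n,\frac{2\alpha_{t-1}(i)^2}{n}\big)$-Bernstein condition.
   Context: **Setting.** Let $V$ be a set of $n$ vertices and $k\in\{1,\dots,n\}$. A configuration is a map $\mathsf{opn}\colon V\to[k]$. **2-Choices.** This is a synchronous process. In each round $t\ge1$, each vertex $v$ independently samples $w_1,w_2\in V$ uniformly with replacement. It sets $\mathsf{opn}_t(v)=\mathsf{opn}_{t-1}(w_1)$ if $\mathsf{opn}_{t-1}(w_1)=\mathsf{opn}_{t-1}(w_2)$, and $\mathsf{opn}_t(v)=\mathsf{opn}_{t-1}(v)$ otherwise. **Basic quantities.** - $\alpha_t(i)=|\{v:\mathsf{opn}_t(v)=i\}|/n$. - $\gamma_t=\sum_i\alpha_t(i)^2$. - $\mathcal F_t$ is generated by $\mathsf{opn}_0,\dots,\mathsf{opn}_t$. **One-sided Bernstein condition.** $X$ satisfies the one-sided $(D,s)$-Bernstein condition if $\mathbb E[e^{\lambda X}]\le\exp\big(\frac{\lambda^2 s/2}{1-\lambda D/3}\big)$ for all $\lambda\ge0$ with $\lambda D<3$. Conditioned on $\mathcal F_{t-1}$, the expectation is replaced by the conditional expectation. *)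

theory Defs
  imports "HOL-Probability.Probability"
begin

definition alpha :: "'a set \<Rightarrow> ('a \<Rightarrow> nat) \<Rightarrow> nat \<Rightarrow> real" where
  "alpha V c i = real (card {v \<in> V. c v = i}) / real (card V)"

definition gamma :: "'a set \<Rightarrow> nat \<Rightarrow> ('a \<Rightarrow> nat) \<Rightarrow> real" where
  "gamma V k c = (\<Sum>i\<in>{1..k}. (alpha V c i)\<^sup>2)"

text \<open>One synchronous round of 2-Choices started from configuration c: every vertex v
  independently samples (w1,w2) uniformly from V x V (with replacement) and adopts
  c w1 if c w1 = c w2, otherwise keeps c v. (Vertices outside V are left unchanged.)
  This is the conditional law of opn_t given F_{t-1}, where c = opn_{t-1}.\<close>
definition two_choices_step :: "'a set \<Rightarrow> ('a \<Rightarrow> nat) \<Rightarrow> ('a \<Rightarrow> nat) pmf" where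
  "two_choices_step V c =
     map_pmf (\<lambda>s v. if v \<in> V \<and> c (fst (s v)) = c (snd (s v)) then c (fst (s v)) else c v)
       (Pi_pmf V undefined (\<lambda>_. pmf_of_set (V \<times> V)))"

definition bernstein_one_sided :: "real \<Rightarrow> real \<Rightarrow> real pmf \<Rightarrow> bool" where
  "bernstein_one_sided D s p \<longleftrightarrow>
     (\<forall>l::real. l \<ge> 0 \<and> l * D < 3 \<longrightarrow>
        measure_pmf.expectation p (\<lambda>x. exp (l * x)) \<le> exp ((l\<^sup>2 * s / 2) / (1 - l * D / 3)))"

end

theory Submission
  imports Defs
begin

lemma expm_bound:
  fixes x :: real assumes "x \<ge> 0"
  shows "exp (-x) \<le> 1 - x + x\<^sup>2/2"
proof -
  let ?k = "\<lambda>x::real. 1 - x + x\<^sup>2/2 - exp (-x)"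
  have "?k 0 \<le> ?k x"
  proof (rule DERIV_nonneg_imp_nondecreasing[OF assms])
    fix y :: real assume "0 \<le> y" "y \<le> x"
    show "\<exists>d. DERIV ?k y :> d \<and> d \<ge> 0"
      apply (rule exI[of _ "-1 + y + exp (-y)"])
      apply (rule conjI)
       apply (auto intro!: derivative_eq_intros simp: power2_eq_square)[1]
      using exp_ge_add_one_self[of "-y"] by linarith
  qed
  then show ?thesis by simp
qed

lemma exp_bern_aux:
  fixes x :: real assumes "x \<ge> 0"
  shows "(1 - x/3) * (exp x - 1 - x) \<le> x\<^sup>2/2"
proof -
  let ?h = "\<lambda>x::real. x/3 + 2/3 - (2/3)*exp x + x * exp x / 3"
  let ?g = "\<lambda>x::real. x\<^sup>2/2 - (1 - x/3) * (exp x - 1 - x)"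
  have hpos: "?h 0 \<le> ?h y" if "y \<ge> 0" for y
  proof (rule DERIV_nonneg_imp_nondecreasing[OF that])
    fix z :: real assume "0 \<le> z" "z \<le> y"
    have "(1 - z) * exp z \<le> 1"
    proof -
      have "1 - z \<le> exp (-z)" using exp_ge_add_one_self[of "-z"] by simp
      hence "(1 - z) * exp z \<le> exp (-z) * exp z" by (intro mult_right_mono) auto
      thus ?thesis by (simp add: exp_minus field_simps)
    qed
    show "\<exists>d. DERIV ?h z :> d \<and> d \<ge> 0"
      apply (rule exI[of _ "1/3 - exp z / 3 + z * exp z / 3"])
      apply (rule conjI)
       apply (auto intro!: derivative_eq_intros simp: field_simps)[1]
      using \<open>(1 - z) * exp z \<le> 1\<close> by (simp add: algebra_simps)
  qed
  have "?g 0 \<le> ?g x"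
  proof (rule DERIV_nonneg_imp_nondecreasing[OF assms])
    fix y :: real assume "0 \<le> y" "y \<le> x"
    show "\<exists>d. DERIV ?g y :> d \<and> d \<ge> 0"
    proof (intro exI conjI)
      show "DERIV ?g y :> ?h y"
        by (auto intro!: derivative_eq_intros simp: field_simps power2_eq_square)
      have "?h 0 = 0" by simp
      thus "?h y \<ge> 0" using hpos[OF \<open>0 \<le> y\<close>] by linarith
    qed
  qed
  then show ?thesis by simp
qed

lemma cosh_bern:
  fixes x :: real assumes "x \<ge> 0" "x < 3"
  shows "exp x + exp (-x) - 2 \<le> x\<^sup>2 / (1 - x/3)"
proof -
  have p: "0 < 1 - x/3" "1 - x/3 \<le> 1" using assms by auto
  have A: "exp x - 1 - x \<le> (x\<^sup>2/2) / (1 - x/3)"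
    using exp_bern_aux[OF assms(1)] p(1) by (subst pos_le_divide_eq) (auto simp: mult.commute)
  have "x\<^sup>2/2 * (1 - x/3) \<le> x\<^sup>2/2 * 1" using p by (intro mult_left_mono) auto
  hence "x\<^sup>2/2 \<le> (x\<^sup>2/2) / (1 - x/3)"
    using p by (subst pos_le_divide_eq) auto
  hence B: "exp (-x) - 1 + x \<le> (x\<^sup>2/2) / (1 - x/3)" using expm_bound[OF assms(1)] by linarith
  have "x\<^sup>2 / (1 - x/3) = (x\<^sup>2/2) / (1 - x/3) + (x\<^sup>2/2) / (1 - x/3)" by (metis add_divide_distrib field_sum_of_halves)
  thus ?thesis using A B by linarith
qed


lemma sum_if_card:
  fixes p q :: real
  assumes "finite A"
  shows "(\<Sum>w\<in>A. if Q w then p else q) = real (card {w\<in>A. Q w}) * p + (real (card A) - real (card {w\<in>A. Q w})) * q"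
proof -
  have "(\<Sum>w\<in>A. if Q w then p else q) = (\<Sum>w\<in>A. q + (if Q w then p - q else 0))"
    by (intro sum.cong) auto
  also have "\<dots> = real (card A) * q + (\<Sum>w\<in>{w\<in>A. Q w}. p - q)"
    using assms by (simp add: sum.distrib sum.inter_filter[symmetric])
  also have "\<dots> = real (card {w\<in>A. Q w}) * p + (real (card A) - real (card {w\<in>A. Q w})) * q"
    by (simp add: algebra_simps)
  finally show ?thesis .
qed

lemma card_pairs_eq:
  fixes V :: "'a set" and c :: "'a \<Rightarrow> nat"
  assumes "finite V" "\<forall>v\<in>V. c v \<in> {1..k}"
  shows "real (card {w\<in>V\<times>V. c (fst w) = c (snd w)}) = (\<Sum>j\<in>{1..k}. real (card {v\<in>V. c v = j})^2)"
proof -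
  have eq: "{w\<in>V\<times>V. c (fst w) = c (snd w)} = (\<Union>j\<in>{1..k}. {v\<in>V. c v = j} \<times> {v\<in>V. c v = j})"
    using assms(2) by auto
  have "card (\<Union>j\<in>{1..k}. {v\<in>V. c v = j} \<times> {v\<in>V. c v = j}) = (\<Sum>j\<in>{1..k}. card ({v\<in>V. c v = j} \<times> {v\<in>V. c v = j}))"
    using assms(1) by (intro card_UN_disjoint) auto
  thus ?thesis unfolding eq by (simp add: card_cartesian_product power2_eq_square)
qed

theorem lemma4p3:
  fixes V :: "'a set" and k :: nat and c :: "'a \<Rightarrow> nat" and i :: nat
  assumes "finite V" and "V \<noteq> {}"
    and "k \<ge> 1" and "k \<le> card V"
    and "\<forall>v\<in>V. c v \<in> {1..k}"
    and "i \<in> {1..k}"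
    and "alpha V c i \<le> gamma V k c"
  shows "bernstein_one_sided (1 / real (card V)) (2 * (alpha V c i)\<^sup>2 / real (card V))
           (map_pmf (\<lambda>c'. alpha V c' i - alpha V c i) (two_choices_step V c))"
proof -
  define n where "n = real (card V)"
  define N where "N = real (card {v\<in>V. c v = i})"
  define a where "a = alpha V c i"
  have npos: "n > 0" using assms(1,2) by (simp add: n_def card_gt_0_iff)
  have aN: "a = N / n" by (simp add: a_def N_def n_def alpha_def)
  have Nn: "N \<le> n" unfolding N_def n_def using assms(1) by (simp add: card_mono)
  have N0: "N \<ge> 0" by (simp add: N_def)
  have a0: "a \<ge> 0" and a1: "a \<le> 1" using aN npos Nn N0 by auto
  have NN: "N = a * n" using aN npos by simp
  define T where "T = {w\<in>V\<times>V. c (fst w) = c (snd w) \<and> c (fst w) \<noteq> i}"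
  have cardT: "real (card T) \<ge> N * (n - N)"
  proof -
    let ?E = "{w\<in>V\<times>V. c (fst w) = c (snd w)}"
    let ?S = "{v\<in>V. c v = i} \<times> {v\<in>V. c v = i}"
    have TE: "T = ?E - ?S" unfolding T_def by auto
    have sub: "?S \<subseteq> ?E" by auto
    have fE: "finite ?E" using assms(1) by auto
    have "card T = card ?E - card ?S" unfolding TE by (rule card_Diff_subset[OF finite_subset[OF sub fE] sub])
    moreover have "card ?S \<le> card ?E" by (rule card_mono[OF fE sub])
    ultimately have cT: "real (card T) = real (card ?E) - N^2"
      by (simp add: N_def card_cartesian_product power2_eq_square)
    have "gamma V k c = (\<Sum>j\<in>{1..k}. real (card {v\<in>V. c v = j})^2) / n^2"
      by (simp add: gamma_def alpha_def n_def power_divide sum_divide_distrib)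
    hence "real (card ?E) = gamma V k c * n^2"
      using card_pairs_eq[OF assms(1,5)] npos by simp
    moreover have "gamma V k c * n^2 \<ge> a * n^2"
      using assms(7) a_def by (intro mult_right_mono) auto
    ultimately have "real (card ?E) \<ge> N * n" using NN by (simp add: power2_eq_square)
    thus ?thesis using cT by (simp add: algebra_simps power2_eq_square)
  qed
  show ?thesis
    unfolding bernstein_one_sided_def
  proof (intro allI impI)
    fix l :: real
    assume lassm: "0 \<le> l \<and> l * (1 / real (card V)) < 3"
    define x where "x = l / n"
    have x0: "x \<ge> 0" and x3: "x < 3" using lassm npos by (auto simp: x_def n_def)
    have l3: "n * 3 - l \<noteq> 0" "n * (n * 3) - l * n \<noteq> 0" "n * 3 - l > 0"
      using x3 npos by (auto simp: x_def field_simps)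
    define X where "X = (\<lambda>v (w::'a\<times>'a). (if (if c (fst w) = c (snd w) then c (fst w) else c v) = i then 1 else 0)
                              - (if c v = i then 1 else (0::real)))"
    define F where "F = (\<lambda>v w. exp (x * X v w))"
    define P where "P = Pi_pmf V undefined (\<lambda>_. pmf_of_set (V \<times> V))"
    define g where "g = (\<lambda>s v. if v \<in> V \<and> c (fst (s v)) = c (snd (s v)) then c (fst (s v)) else c v)"
    have step: "two_choices_step V c = map_pmf g P" unfolding two_choices_step_def g_def P_def ..
    have pt: "exp (l * (alpha V (g s) i - a)) = (\<Prod>v\<in>V. F v (s v))" for s
    proof -
      have c1: "real (card {v\<in>V. g s v = i}) = (\<Sum>v\<in>V. if g s v = i then 1 else 0)"
        using assms(1) by (simp add: sum.inter_filter[symmetric])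
      have c2: "N = (\<Sum>v\<in>V. if c v = i then 1 else 0)"
        using assms(1) by (simp add: N_def sum.inter_filter[symmetric])
      have "alpha V (g s) i - a = (\<Sum>v\<in>V. X v (s v)) / n"
        unfolding aN alpha_def n_def[symmetric] c1 c2 X_def
        by (simp add: sum_subtractf diff_divide_distrib g_def)
      hence "l * (alpha V (g s) i - a) = (\<Sum>v\<in>V. x * X v (s v))"
        by (simp add: x_def sum_distrib_left sum_divide_distrib)
      thus ?thesis by (simp add: F_def exp_sum assms(1))
    qed
    have fVV: "finite (V \<times> V)" "V \<times> V \<noteq> {}" using assms(1,2) by auto
    have sp: "set_pmf (pmf_of_set (V \<times> V)) = V \<times> V" by (rule set_pmf_of_set[OF fVV(2,1)])
    define E where "E = (\<lambda>v. measure_pmf.expectation (pmf_of_set (V \<times> V)) (F v))"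
    have Eform: "E v = (\<Sum>w\<in>V\<times>V. F v w) / n^2" for v
      unfolding E_def using fVV by (simp add: integral_pmf_of_set card_cartesian_product n_def power2_eq_square)
    have E0: "E v \<ge> 0" for v unfolding Eform by (intro divide_nonneg_nonneg sum_nonneg) (auto simp: F_def)
    have lhs: "measure_pmf.expectation (map_pmf (\<lambda>c'. alpha V c' i - alpha V c i) (two_choices_step V c)) (\<lambda>y. exp (l * y))
          = (\<Prod>v\<in>V. E v)"
    proof -
      have "measure_pmf.expectation (map_pmf (\<lambda>c'. alpha V c' i - alpha V c i) (two_choices_step V c)) (\<lambda>y. exp (l * y))
          = measure_pmf.expectation P (\<lambda>s. \<Prod>v\<in>V. F v (s v))"
        by (simp add: step map_pmf_comp pt a_def[symmetric])
      also have "\<dots> = (\<Prod>v\<in>V. E v)"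
        unfolding P_def E_def
        by (rule expectation_prod_Pi_pmf[OF assms(1)])
           (auto simp: F_def sp fVV(1) intro!: integrable_measure_pmf_finite)
      finally show ?thesis .
    qed
    define B where "B = (\<lambda>v. if c v = i then a * (1 - a) * (exp (-x) - 1) else a^2 * (exp x - 1))"
    have EB: "E v \<le> exp (B v)" for v
    proof -
      have "E v \<le> 1 + B v"
      proof (cases "c v = i")
        case True
        have "(\<Sum>w\<in>V\<times>V. F v w) = (\<Sum>w\<in>V\<times>V. if c (fst w) = c (snd w) \<and> c (fst w) \<noteq> i then exp (-x) else 1)"
          using True by (intro sum.cong) (auto simp: F_def X_def)
        also have "\<dots> = real (card T) * exp (-x) + (n^2 - real (card T)) * 1"
          by (subst sum_if_card[OF fVV(1)]) (simp add: T_def card_cartesian_product n_def power2_eq_square)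
        finally have "E v = 1 + real (card T) / n^2 * (exp (-x) - 1)"
          unfolding Eform using npos by (simp add: field_simps)
        moreover have "real (card T) / n^2 \<ge> a * (1 - a)"
          using cardT npos NN by (simp add: field_simps power2_eq_square)
        moreover have "exp (-x) - 1 \<le> 0" using x0 by simp
        ultimately have "E v \<le> 1 + a * (1 - a) * (exp (-x) - 1)"
          using mult_right_mono_neg[of "a * (1 - a)" "real (card T) / n^2" "exp (-x) - 1"] by linarith
        thus ?thesis using True by (simp add: B_def)
      next
        case False
        have "(\<Sum>w\<in>V\<times>V. F v w) = (\<Sum>w\<in>V\<times>V. if c (fst w) = i \<and> c (snd w) = i then exp x else 1)"
          using False by (intro sum.cong) (auto simp: F_def X_def)
        also have "\<dots> = N^2 * exp x + (n^2 - N^2) * 1"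
        proof -
          have "{w\<in>V\<times>V. c (fst w) = i \<and> c (snd w) = i} = {v\<in>V. c v = i} \<times> {v\<in>V. c v = i}" by auto
          thus ?thesis
            by (subst sum_if_card[OF fVV(1)]) (simp add: N_def card_cartesian_product n_def power2_eq_square)
        qed
        finally have "E v = 1 + a^2 * (exp x - 1)"
          unfolding Eform using npos NN by (simp add: field_simps power2_eq_square)
        thus ?thesis using False by (simp add: B_def)
      qed
      also have "\<dots> \<le> exp (B v)" by simp
      finally show ?thesis .
    qed
    have "(\<Prod>v\<in>V. E v) \<le> (\<Prod>v\<in>V. exp (B v))"
      by (intro prod_mono) (auto simp: E0 EB)
    also have "\<dots> = exp (\<Sum>v\<in>V. B v)" by (simp add: exp_sum assms(1))
    also have "(\<Sum>v\<in>V. B v) = N * (a * (1 - a) * (exp (-x) - 1)) + (n - N) * (a^2 * (exp x - 1))"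
      unfolding B_def by (subst sum_if_card[OF assms(1)]) (simp add: N_def n_def)
    also have "\<dots> = n * a^2 * (1 - a) * (exp x + exp (-x) - 2)"
      by (simp add: NN algebra_simps power2_eq_square)
    also have "\<dots> \<le> n * a^2 * (exp x + exp (-x) - 2)"
    proof -
      have "exp x + exp (-x) - 2 \<ge> 0" using exp_ge_add_one_self[of x] exp_ge_add_one_self[of "-x"] by linarith
      moreover have "n * a^2 \<ge> 0" using npos by simp
      ultimately have "(1 - a) * (n * a^2 * (exp x + exp (-x) - 2)) \<le> 1 * (n * a^2 * (exp x + exp (-x) - 2))"
        using a0 by (intro mult_right_mono) auto
      thus ?thesis by (simp add: algebra_simps)
    qed
    also have "\<dots> \<le> n * a^2 * (x^2 / (1 - x/3))"
      using cosh_bern[OF x0 x3] npos by (intro mult_left_mono) auto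
    also have "\<dots> = (l\<^sup>2 * (2 * (alpha V c i)\<^sup>2 / real (card V)) / 2) / (1 - l * (1 / real (card V)) / 3)"
      using npos l3 by (simp add: x_def a_def[symmetric] n_def[symmetric] field_simps power2_eq_square)
    finally show "measure_pmf.expectation (map_pmf (\<lambda>c'. alpha V c' i - alpha V c i) (two_choices_step V c)) (\<lambda>y. exp (l * y))
          \<le> exp ((l\<^sup>2 * (2 * (alpha V c i)\<^sup>2 / real (card V)) / 2) / (1 - l * (1 / real (card V)) / 3))"
      unfolding lhs by simp
  qed
qed

end
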